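(* Let $T$ be a tree with leaves $1,\dots,n$ in which every non-leaf node has degree $3$, and let $i,j$ be two leaves of $T$. Let $\alpha,\beta\in[-1,1]^{\binom n2}$ satisfy $\alpha_{kl}=\beta_{kl}$ for all pairs $(k,l)\neq(i,j)$. Define $\gamma\in[-1,1]^{\binom n2}$ by $\gamma_{kl}=0$ if the paths $P_{ij}$ and $P_{kl}$ have a common edge, and $\gamma_{kl}=\alpha_{kl}$ otherwise. Then for every $x\in\{-1,1\}^n$, $$f_x^T(\alpha)-f_x^T(\beta) = x_ix_j(\alpha_{ij}-\beta_{ij})\, f_x^{T\setminus\{i,j\}}(\gamma).$$
   Context: $P_{kl}$ denotes the path between nodes $k,l$. For a forest $F$ whose set of labeled leaves is $\{1,\dots,n\}$ and an even-cardinality subset $S\subseteq[n]$, a closest relative matching of $S$ in $F$ is a partition of $S$ into pairs such that each pair lies in a common connected component of $F$ and the paths (in $F$) joining distinct pairs are edge-disjoint; when it exists it is unique. For $\alpha\in[-1,1]^{\binom n2}$ let $\alpha^F_S=\prod_{(a,b)}\alpha_{ab}$ over the pairs of this matching (and $\alpha^F_\emptyset=1$). Define $f_x^F(\alpha)=2^{-n}\sum_{S}\alpha^F_S\prod_{k\in S}x_k$, the sum over even subsets $S\subseteq[n]$ admitting a closest relative matching in $F$ (for a tree $F$ this is every even subset). For a tree this is defined for arbitrary $\alpha$, and when $\alpha$ is the vector of leaf correlations of a tree Ising model on $T$, $f_x^T(\alpha)$ is the probability of leaf configuration $x$. $T\setminus\{i,j\}$ denotes the forest obtained from $T$ by removing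 all edges of the path $P_{ij}$ (keeping all nodes, with the same leaf labels). *)

theory Defs
  imports Complex_Main
begin

definition is_path :: "'v set set \<Rightarrow> 'v \<Rightarrow> 'v \<Rightarrow> 'v list \<Rightarrow> bool" where
  "is_path E u v ps \<longleftrightarrow> ps \<noteq> [] \<and> hd ps = u \<and> last ps = v \<and> distinct ps \<and>
     (\<forall>k. Suc k < length ps \<longrightarrow> {ps ! k, ps ! Suc k} \<in> E)"

definition path_edges :: "'v list \<Rightarrow> 'v set set" where
  "path_edges ps = {{ps ! k, ps ! Suc k} | k. Suc k < length ps}"

definition is_cycle :: "'v set set \<Rightarrow> 'v list \<Rightarrow> bool" where
  "is_cycle E cs \<longleftrightarrow> length cs \<ge> 3 \<and> distinct cs \<and>
     (\<forall>k. Suc k < length cs \<longrightarrow> {cs ! k, cs ! Suc k} \<in> E) \<and> {last cs, hd cs} \<in> E"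

definition is_tree :: "'v set \<Rightarrow> 'v set set \<Rightarrow> bool" where
  "is_tree V E \<longleftrightarrow> finite V \<and> V \<noteq> {} \<and> (\<forall>e\<in>E. e \<subseteq> V \<and> card e = 2) \<and>
     (\<forall>u\<in>V. \<forall>v\<in>V. \<exists>ps. is_path E u v ps) \<and> \<not> (\<exists>cs. is_cycle E cs)"

definition degree :: "'v set set \<Rightarrow> 'v \<Rightarrow> nat" where
  "degree E v = card {e \<in> E. v \<in> e}"

text \<open>Edge set of the (unique, in a forest) path between u and v.\<close>
definition pedges :: "'v set set \<Rightarrow> 'v \<Rightarrow> 'v \<Rightarrow> 'v set set" where
  "pedges E u v = path_edges (THE ps. is_path E u v ps)"

definition pair_edges :: "'v set set \<Rightarrow> (nat \<Rightarrow> 'v) \<Rightarrow> nat set \<Rightarrow> 'v set set" where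
  "pair_edges E lf p = pedges E (lf (Min p)) (lf (Max p))"

definition crm :: "'v set set \<Rightarrow> (nat \<Rightarrow> 'v) \<Rightarrow> nat set \<Rightarrow> nat set set \<Rightarrow> bool" where
  "crm E lf S M \<longleftrightarrow>
     (\<forall>p\<in>M. card p = 2) \<and> \<Union>M = S \<and> (\<forall>p\<in>M. \<forall>q\<in>M. p \<noteq> q \<longrightarrow> p \<inter> q = {}) \<and>
     (\<forall>p\<in>M. \<exists>ps. is_path E (lf (Min p)) (lf (Max p)) ps) \<and>
     (\<forall>p\<in>M. \<forall>q\<in>M. p \<noteq> q \<longrightarrow> pair_edges E lf p \<inter> pair_edges E lf q = {})"

definition alphaF :: "'v set set \<Rightarrow> (nat \<Rightarrow> 'v) \<Rightarrow> (nat set \<Rightarrow> real) \<Rightarrow> nat set \<Rightarrow> real" where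
  "alphaF E lf \<alpha> S = (\<Prod>p\<in>(THE M. crm E lf S M). \<alpha> p)"

definition fF :: "'v set set \<Rightarrow> (nat \<Rightarrow> 'v) \<Rightarrow> nat \<Rightarrow> (nat set \<Rightarrow> real) \<Rightarrow> (nat \<Rightarrow> real) \<Rightarrow> real" where
  "fF E lf n \<alpha> x = (1 / 2 ^ n) *
     (\<Sum>S\<in>{S. S \<subseteq> {1..n} \<and> even (card S) \<and> (\<exists>M. crm E lf S M)}.
        alphaF E lf \<alpha> S * (\<Prod>k\<in>S. x k))"

definition gammaV :: "'v set set \<Rightarrow> (nat \<Rightarrow> 'v) \<Rightarrow> nat \<Rightarrow> nat \<Rightarrow> (nat set \<Rightarrow> real) \<Rightarrow> nat set \<Rightarrow> real" where
  "gammaV E lf i j \<alpha> p =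
     (if pair_edges E lf p \<inter> pedges E (lf i) (lf j) \<noteq> {} then 0 else \<alpha> p)"

end

theory Submission
  imports Defs
begin


definition dg :: "'v set set \<Rightarrow> 'v \<Rightarrow> nat" where
  "dg F v = card {e\<in>F. v \<in> e}"

fun pe :: "'v list \<Rightarrow> 'v set set" where
  "pe (a # b # xs) = insert {a, b} (pe (b # xs))"
| "pe _ = {}"

lemma path_edges_Cons2: "path_edges (a # b # xs) = insert {a, b} (path_edges (b # xs))"
proof -
  have "path_edges (a # b # xs) = {{(a#b#xs) ! k, (a#b#xs) ! Suc k} | k. Suc k < length (a#b#xs)}"
    by (simp add: path_edges_def)
  also have "\<dots> = insert {a,b} {{(b#xs) ! k, (b#xs) ! Suc k} | k. Suc k < length (b#xs)}"
  proof (rule set_eqI, rule iffI)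
    fix e assume "e \<in> {{(a#b#xs) ! k, (a#b#xs) ! Suc k} | k. Suc k < length (a#b#xs)}"
    then obtain k where k: "e = {(a#b#xs) ! k, (a#b#xs) ! Suc k}" "Suc k < length (a#b#xs)" by blast
    show "e \<in> insert {a,b} {{(b#xs) ! k, (b#xs) ! Suc k} | k. Suc k < length (b#xs)}"
    proof (cases k)
      case 0 then show ?thesis using k by simp
    next
      case (Suc m) then show ?thesis using k by auto
    qed
  next
    fix e assume "e \<in> insert {a,b} {{(b#xs) ! k, (b#xs) ! Suc k} | k. Suc k < length (b#xs)}"
    then show "e \<in> {{(a#b#xs) ! k, (a#b#xs) ! Suc k} | k. Suc k < length (a#b#xs)}"
    proof
      assume "e = {a,b}"
      then have "e = {(a#b#xs)!0, (a#b#xs)!Suc 0} \<and> Suc 0 < length (a#b#xs)" by simp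
      then show ?thesis by blast
    next
      assume "e \<in> {{(b#xs) ! k, (b#xs) ! Suc k} | k. Suc k < length (b#xs)}"
      then obtain k where k: "e = {(b#xs) ! k, (b#xs) ! Suc k}" "Suc k < length (b#xs)" by blast
      then have "e = {(a#b#xs)!Suc k, (a#b#xs)!Suc (Suc k)} \<and> Suc (Suc k) < length (a#b#xs)" by simp
      then show ?thesis by blast
    qed
  qed
  also have "\<dots> = insert {a, b} (path_edges (b # xs))" by (simp add: path_edges_def)
  finally show ?thesis .
qed

lemma path_edges_pe: "path_edges ps = pe ps"
proof (induction ps rule: pe.induct)
  case (1 a b xs) then show ?case by (simp only: path_edges_Cons2 pe.simps)
qed (auto simp: path_edges_def)

fun walk :: "'v set set \<Rightarrow> 'v list \<Rightarrow> bool" where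
  "walk F (a # b # xs) = ({a, b} \<in> F \<and> walk F (b # xs))"
| "walk F _ = True"

lemma walk_nth: "walk F ps \<longleftrightarrow> (\<forall>k. Suc k < length ps \<longrightarrow> {ps ! k, ps ! Suc k} \<in> F)"
proof (induction F ps rule: walk.induct)
  case (1 F a b xs)
  show ?case
  proof
    assume "walk F (a # b # xs)"
    then show "\<forall>k. Suc k < length (a#b#xs) \<longrightarrow> {(a#b#xs) ! k, (a#b#xs) ! Suc k} \<in> F"
      using 1 by (auto simp: less_Suc_eq_0_disj)
  next
    assume H: "\<forall>k. Suc k < length (a#b#xs) \<longrightarrow> {(a#b#xs) ! k, (a#b#xs) ! Suc k} \<in> F"
    have "{a,b} \<in> F" using H[rule_format, of 0] by simp
    moreover have "walk F (b # xs)" using 1 H[rule_format, of "Suc k" for k] by auto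
    ultimately show "walk F (a # b # xs)" by simp
  qed
qed (auto simp: less_Suc_eq_0_disj)

lemma is_path_walk: "is_path E u v ps \<longleftrightarrow> ps \<noteq> [] \<and> hd ps = u \<and> last ps = v \<and> distinct ps \<and> walk E ps"
  by (simp add: is_path_def walk_nth)

lemma walk_pe: "walk F ps \<longleftrightarrow> pe ps \<subseteq> F"
  by (induction F ps rule: walk.induct) auto

lemma pe_subset_set: "e \<in> pe ps \<Longrightarrow> e \<subseteq> set ps"
  by (induction ps rule: pe.induct) auto

lemma finite_pe: "finite (pe ps)"
  by (induction ps rule: pe.induct) auto

lemma walk_append1: "ps \<noteq> [] \<Longrightarrow> walk F (ps @ [w]) \<longleftrightarrow> walk F ps \<and> {last ps, w} \<in> F"
  by (induction F ps rule: walk.induct) auto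

lemma pe_rev: "pe (rev ps) = pe ps"
proof (induction ps rule: pe.induct)
  case (1 a b xs)
  have "pe (rev (b # xs) @ [a]) = insert {b, a} (pe (rev (b # xs)))"
  proof -
    have g: "\<And>ys. ys \<noteq> [] \<Longrightarrow> pe (ys @ [a]) = insert {last ys, a} (pe ys)"
    proof -
      fix ys :: "'a list" assume "ys \<noteq> []"
      then show "pe (ys @ [a]) = insert {last ys, a} (pe ys)"
        by (induction ys rule: pe.induct) auto
    qed
    show ?thesis using g[of "rev (b#xs)"] by simp
  qed
  then show ?case using 1 by (auto simp: insert_commute)
qed auto

lemma walk_rev: "walk F (rev ps) \<longleftrightarrow> walk F ps"
  by (simp add: walk_pe pe_rev)

lemma is_path_rev: "is_path E u v ps \<Longrightarrow> is_path E v u (rev ps)"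
  by (auto simp: is_path_walk walk_rev hd_rev last_rev)

lemma dg_insert: "finite F \<Longrightarrow> e \<notin> F \<Longrightarrow> dg (insert e F) v = (if v \<in> e then Suc (dg F v) else dg F v)"
proof -
  assume a: "finite F" "e \<notin> F"
  have "{x\<in>insert e F. v \<in> x} = (if v \<in> e then insert e {x\<in>F. v \<in> x} else {x\<in>F. v \<in> x})" by auto
  then show ?thesis using a unfolding dg_def by auto
qed

lemma dg_pe: "distinct ps \<Longrightarrow> length ps \<ge> 2 \<Longrightarrow>
  dg (pe ps) v = (if v \<notin> set ps then 0 else if v = hd ps \<or> v = last ps then 1 else 2)"
proof (induction ps rule: pe.induct)
  case (1 a b xs)
  have nin: "{a,b} \<notin> pe (b # xs)" using 1(2) pe_subset_set[of "{a,b}" "b#xs"] by auto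
  show ?case
  proof (cases xs)
    case Nil
    have "{e \<in> {{a,b}}. v \<in> e} = (if v \<in> {a,b} then {{a,b}} else {})" by auto
    then show ?thesis using 1(2) Nil by (simp add: dg_def)
  next
    case (Cons c ys)
    have IH: "dg (pe (b # xs)) v = (if v \<notin> set (b#xs) then 0 else if v = hd (b#xs) \<or> v = last (b#xs) then 1 else 2)"
      using 1 Cons by simp
    have lb: "last (b # xs) \<noteq> b" using 1(2) Cons by (auto simp: last_in_set)
    have eq: "pe (a#b#xs) = insert {a,b} (pe (b#xs))" by (rule pe.simps(1))
    have D: "dg (pe (a#b#xs)) v = (if v \<in> {a,b} then Suc (dg (pe (b#xs)) v) else dg (pe (b#xs)) v)"
      unfolding eq by (rule dg_insert[OF finite_pe nin])
    show ?thesis using 1(2) IH lb Cons D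
      by (auto simp del: pe.simps)
  qed
qed auto



lemma card2_finite: "card e = 2 \<Longrightarrow> finite e"
  by (metis card.infinite zero_neq_numeral)

lemma card2_mem: "card e = 2 \<Longrightarrow> u \<in> e \<Longrightarrow> \<exists>w. e = {u, w} \<and> w \<noteq> u"
  by (auto simp: card_2_iff)

lemma walk_set: "walk F ps \<Longrightarrow> length ps \<ge> 2 \<Longrightarrow> set ps \<subseteq> \<Union>F"
proof
  fix x assume w: "walk F ps" and l: "length ps \<ge> 2" and x: "x \<in> set ps"
  then obtain k where k: "k < length ps" "ps ! k = x" by (auto simp: in_set_conv_nth)
  show "x \<in> \<Union>F"
  proof (cases "Suc k < length ps")
    case True
    then have "{ps ! k, ps ! Suc k} \<in> F" using w by (simp add: walk_nth)
    then show ?thesis using k by blast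
  next
    case False
    then obtain m where m: "k = Suc m" using l k by (cases k) auto
    then have "{ps ! m, ps ! Suc m} \<in> F" using w k(1) unfolding walk_nth by blast
    then show ?thesis using k m by blast
  qed
qed

lemma even_acyclic_empty:
  assumes fin: "finite F" and sub: "F \<subseteq> E" and c2: "\<forall>e\<in>F. card e = 2"
    and nc: "\<not>(\<exists>cs. is_cycle E cs)" and ev: "\<forall>v. even (dg F v)"
  shows "F = {}"
proof (rule ccontr)
  assume "F \<noteq> {}"
  then obtain e where e: "e \<in> F" by auto
  then obtain a b where ab: "e = {a,b}" "a \<noteq> b" using c2 by (metis card_2_iff)
  have finW: "finite (\<Union>F)" using fin c2 card2_finite by auto
  define P where "P ps \<longleftrightarrow> distinct ps \<and> length ps \<ge> 2 \<and> walk F ps" for ps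
  have Pab: "P [a,b]" using ab e by (simp add: P_def)
  have bound: "\<forall>y. (\<exists>ys. P ys \<and> length ys = y) \<longrightarrow> y \<le> card (\<Union>F)"
  proof (intro allI impI)
    fix y assume "\<exists>ys. P ys \<and> length ys = y"
    then obtain ys where ys: "P ys" "length ys = y" by blast
    have "card (set ys) \<le> card (\<Union>F)" using walk_set[of F ys] ys finW by (intro card_mono) (auto simp: P_def)
    then show "y \<le> card (\<Union>F)" using ys distinct_card[of ys] by (simp add: P_def)
  qed
  obtain L where "\<exists>ys. P ys \<and> length ys = L" and maxL: "\<forall>y. (\<exists>ys. P ys \<and> length ys = y) \<longrightarrow> y \<le> L"
    using Nat.ex_has_greatest_nat[of "\<lambda>y. \<exists>ys. P ys \<and> length ys = y", OF _ bound] Pab by blast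
  then obtain ps where ps: "P ps" "length ps = L" by blast
  have max: "\<And>ys. P ys \<Longrightarrow> length ys \<le> length ps" using maxL ps by blast
  have L2: "L \<ge> 2" and dps: "distinct ps" and wps: "walk F ps" using ps by (auto simp: P_def)
  define u where "u = ps ! (L - 1)"
  define p where "p = ps ! (L - 2)"
  have "ps \<noteq> []" using L2 ps by auto
  then have ulast: "last ps = u" using ps by (simp add: u_def last_conv_nth)
  have "Suc (L-2) < length ps" using L2 ps by simp
  then have "{ps!(L-2), ps!Suc(L-2)} \<in> F" using wps unfolding walk_nth by blast
  moreover have "Suc (L-2) = L - 1" using L2 by simp
  ultimately have pu: "{p, u} \<in> F" by (simp add: p_def u_def)
  have puF: "{p,u} \<in> {e\<in>F. u \<in> e}" using pu by auto
  have fin_u: "finite {e\<in>F. u \<in> e}" using fin by auto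
  have "dg F u \<noteq> 0" using puF fin_u unfolding dg_def by (auto simp: card_eq_0_iff)
  moreover have "dg F u \<noteq> 1" using ev by (metis odd_one)
  ultimately have "dg F u \<ge> 2" by arith
  have "\<exists>e'\<in>{e\<in>F. u \<in> e}. e' \<noteq> {p,u}"
  proof (rule ccontr)
    assume "\<not> ?thesis"
    then have "{e\<in>F. u \<in> e} \<subseteq> {{p,u}}" by auto
    then have "card {e\<in>F. u \<in> e} \<le> card {{p,u}}" by (intro card_mono) auto
    then have "dg F u \<le> 1" unfolding dg_def by simp
    then show False using \<open>dg F u \<ge> 2\<close> by simp
  qed
  then obtain e' where e': "e' \<in> F" "u \<in> e'" "e' \<noteq> {p,u}" by auto
  then obtain w where w: "e' = {u, w}" "w \<noteq> u" using c2 card2_mem by metis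
  have wp: "w \<noteq> p" using w e' by (auto simp: insert_commute)
  show False
  proof (cases "w \<in> set ps")
    case False
    have "walk F (ps @ [w])" using walk_append1[of ps F w] \<open>ps \<noteq> []\<close> wps ulast e' w by simp
    then have "P (ps @ [w])" using False dps L2 ps by (auto simp: P_def)
    then show False using max[of "ps @ [w]"] by simp
  next
    case True
    then obtain k where k: "k < L" "ps ! k = w" using ps by (auto simp: in_set_conv_nth)
    have k1: "k \<noteq> L - 1" using k w u_def by auto
    have k2: "k \<noteq> L - 2" using k wp p_def by auto
    define cs where "cs = drop k ps"
    have "is_cycle E cs"
      unfolding is_cycle_def
    proof (intro conjI allI impI)
      show "3 \<le> length cs" using k k1 k2 ps L2 by (simp add: cs_def)
      show "distinct cs" using dps by (simp add: cs_def)
      fix m assume "Suc m < length cs"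
      then have "{ps ! (k + m), ps ! Suc (k + m)} \<in> F" using wps ps by (simp add: walk_nth cs_def)
      then show "{cs ! m, cs ! Suc m} \<in> E" using sub k ps by (auto simp: cs_def nth_drop)
    next
      have "last cs = u" using k ps ulast by (simp add: cs_def)
      moreover have "hd cs = w" using k ps by (simp add: cs_def hd_drop_conv_nth)
      ultimately show "{last cs, hd cs} \<in> E" using e' w sub by auto
    qed
    then show False using nc by blast
  qed
qed



lemma two_edges: "finite F \<Longrightarrow> {x,a} \<in> F \<Longrightarrow> {x,b} \<in> F \<Longrightarrow> a \<noteq> b \<Longrightarrow> a \<noteq> x \<Longrightarrow> b \<noteq> x \<Longrightarrow> dg F x \<ge> 2"
proof -
  assume a: "finite F" "{x,a} \<in> F" "{x,b} \<in> F" "a \<noteq> b" "a \<noteq> x" "b \<noteq> x"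
  have ne: "{x,a} \<noteq> {x,b}" using a by (auto simp: doubleton_eq_iff)
  have "card {{x,a},{x,b}} \<le> card {e\<in>F. x \<in> e}" using a by (intro card_mono) auto
  then show ?thesis using ne unfolding dg_def by simp
qed

lemma three_edges: "finite F \<Longrightarrow> {x,a} \<in> F \<Longrightarrow> {x,b} \<in> F \<Longrightarrow> {x,c} \<in> F \<Longrightarrow> a \<noteq> b \<Longrightarrow> a \<noteq> c \<Longrightarrow> b \<noteq> c
   \<Longrightarrow> a \<noteq> x \<Longrightarrow> b \<noteq> x \<Longrightarrow> c \<noteq> x \<Longrightarrow> dg F x \<ge> 3"
proof -
  assume a: "finite F" "{x,a} \<in> F" "{x,b} \<in> F" "{x,c} \<in> F" "a \<noteq> b" "a \<noteq> c" "b \<noteq> c" "a \<noteq> x" "b \<noteq> x" "c \<noteq> x"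
  have ne: "{x,a} \<noteq> {x,b}" "{x,a} \<noteq> {x,c}" "{x,b} \<noteq> {x,c}" using a by (auto simp: doubleton_eq_iff)
  have "card {{x,a},{x,b},{x,c}} \<le> card {e\<in>F. x \<in> e}" using a by (intro card_mono) auto
  then show ?thesis using ne unfolding dg_def by simp
qed

lemma path_len2: "is_path F u v ps \<Longrightarrow> u \<noteq> v \<Longrightarrow> length ps \<ge> 2"
proof (rule ccontr)
  assume a: "is_path F u v ps" "u \<noteq> v" "\<not> length ps \<ge> 2"
  then obtain x xs where x: "ps = x # xs" unfolding is_path_def by (cases ps) auto
  then have "xs = []" using a by (cases xs) auto
  then show False using a x unfolding is_path_def by auto
qed

lemma path_same: "is_path F u u ps \<Longrightarrow> ps = [u]"
proof -
  assume a: "is_path F u u ps"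
  then have ne: "ps \<noteq> []" "distinct ps" "hd ps = u" "last ps = u" unfolding is_path_def by auto
  show "ps = [u]"
  proof (cases "length ps \<ge> 2")
    case True
    have "ps ! 0 = ps ! (length ps - 1)" using ne by (simp add: hd_conv_nth last_conv_nth)
    moreover have "length ps - 1 < length ps" "0 < length ps" "0 \<noteq> length ps - 1" using True by auto
    ultimately show ?thesis using ne(2) by (metis nth_eq_iff_index_eq)
  next
    case False
    then obtain x xs where x: "ps = x # xs" using ne by (cases ps) auto
    then have "xs = []" using False by (cases xs) auto
    then show ?thesis using ne x by simp
  qed
qed

lemma deg2_unique:
  assumes fin: "finite F" and p1: "is_path F u v ps" and p2: "is_path F u w qs"
    and du: "dg F u \<le> 1" and d2: "\<forall>x. dg F x \<le> 2" and dv: "dg F v \<le> 1" and dw: "dg F w \<le> 1"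
    and uv: "u \<noteq> v" and uw: "u \<noteq> w"
  shows "ps = qs"
proof -
  have dp: "distinct ps" and dq: "distinct qs" and wp: "walk F ps" and wq: "walk F qs"
    and hp: "ps ! 0 = u" and hq: "qs ! 0 = u"
    using p1 p2 by (auto simp: is_path_walk hd_conv_nth)
  have L1: "length ps \<ge> 2" using path_len2[OF p1 uv] .
  have L2: "length qs \<ge> 2" using path_len2[OF p2 uw] .
  have ep: "\<And>k. Suc k < length ps \<Longrightarrow> {ps!k, ps!Suc k} \<in> F" using wp by (simp add: walk_nth)
  have eq: "\<And>k. Suc k < length qs \<Longrightarrow> {qs!k, qs!Suc k} \<in> F" using wq by (simp add: walk_nth)
  have nep: "\<And>i j. i < length ps \<Longrightarrow> j < length ps \<Longrightarrow> i \<noteq> j \<Longrightarrow> ps!i \<noteq> ps!j"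
    using dp by (metis nth_eq_iff_index_eq)
  have neq: "\<And>i j. i < length qs \<Longrightarrow> j < length qs \<Longrightarrow> i \<noteq> j \<Longrightarrow> qs!i \<noteq> qs!j"
    using dq by (metis nth_eq_iff_index_eq)
  have pre: "k < length ps \<Longrightarrow> k < length qs \<Longrightarrow> ps!k = qs!k" for k
  proof (induction k rule: less_induct)
    case (less k)
    show ?case
    proof (cases k)
      case 0 then show ?thesis using hp hq by simp
    next
      case (Suc m)
      show ?thesis
      proof (cases m)
        case 0
        have e1: "{u, ps!1} \<in> F" using ep[of 0] less Suc 0 hp by simp
        have e2: "{u, qs!1} \<in> F" using eq[of 0] less Suc 0 hq by simp
        have "1 < length ps" "1 < length qs" using less.prems Suc 0 by auto
        then have z: "0 < length ps" "0 < length qs" by auto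
        have n1: "ps!1 \<noteq> u" using nep[OF \<open>1 < length ps\<close> z(1)] hp by simp
        have n2: "qs!1 \<noteq> u" using neq[OF \<open>1 < length qs\<close> z(2)] hq by simp
        show ?thesis
        proof (rule ccontr)
          assume "ps!k \<noteq> qs!k"
          then have "dg F u \<ge> 2" using two_edges[OF fin e1 e2] n1 n2 Suc 0 by simp
          then show False using du by simp
        qed
      next
        case (Suc m')
        have k: "k = Suc (Suc m')" using Suc \<open>k = Suc m\<close> by simp
        have x: "ps!(Suc m') = qs!(Suc m')" using less k by simp
        have y: "ps!m' = qs!m'" using less k by simp
        let ?x = "ps!(Suc m')"
        have e0: "{?x, ps!m'} \<in> F" using ep[of m'] less k by (simp add: insert_commute)
        have e1: "{?x, ps!k} \<in> F" using ep[of "Suc m'"] less k by simp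
        have e2: "{?x, qs!k} \<in> F" using eq[of "Suc m'"] less k x by simp
        have lp: "k < length ps" "Suc m' < length ps" "m' < length ps" using less.prems k by auto
        have lq: "k < length qs" "Suc m' < length qs" "m' < length qs" using less.prems k by auto
        have n1: "ps!k \<noteq> ?x" "ps!k \<noteq> ps!m'" "ps!m' \<noteq> ?x"
          using nep[of k "Suc m'"] nep[of k m'] nep[of m' "Suc m'"] lp k by auto
        have n2: "qs!k \<noteq> ?x" "qs!k \<noteq> ps!m'"
          using neq[of k "Suc m'"] neq[of k m'] lq k x y by auto
        show ?thesis
        proof (rule ccontr)
          assume "ps!k \<noteq> qs!k"
          then have "dg F ?x \<ge> 3" using three_edges[OF fin e0 e1 e2] n1 n2 by auto
          then show False using d2 by (metis not_less_eq_eq numeral_3_eq_3 numeral_2_eq_2)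
        qed
      qed
    qed
  qed
  have lv: "last ps = v" and lw: "last qs = w" using p1 p2 by (auto simp: is_path_def)
  have A: "\<not> length ps < length qs"
  proof
    assume lt: "length ps < length qs"
    define L where "L = length ps"
    have vv: "qs!(L-1) = v" using pre[of "L-1"] lt L1 lv p1 by (simp add: L_def last_conv_nth is_path_def)
    have e1: "{qs!(L-1), qs!(L-2)} \<in> F" using eq[of "L-2"] lt L1 unfolding L_def
      by (simp add: insert_commute Suc_diff_Suc numeral_2_eq_2)
    have sl: "Suc (L-1) = L" using L1 by (simp add: L_def)
    have e2: "{qs!(L-1), qs!L} \<in> F" using eq[of "L-1"] lt unfolding sl by (simp add: L_def)
    have "qs!(L-2) \<noteq> qs!L" "qs!(L-2) \<noteq> qs!(L-1)" "qs!L \<noteq> qs!(L-1)"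
      using neq[of "L-2" L] neq[of "L-2" "L-1"] neq[of L "L-1"] lt L1 unfolding L_def by auto
    then have "dg F (qs!(L-1)) \<ge> 2" using two_edges[OF fin e1 e2] by auto
    then show False using dv vv by simp
  qed
  have B: "\<not> length qs < length ps"
  proof
    assume lt: "length qs < length ps"
    define L where "L = length qs"
    have vv: "ps!(L-1) = w" using pre[of "L-1"] lt L2 lw p2 by (simp add: L_def last_conv_nth is_path_def)
    have e1: "{ps!(L-1), ps!(L-2)} \<in> F" using ep[of "L-2"] lt L2 unfolding L_def
      by (simp add: insert_commute Suc_diff_Suc numeral_2_eq_2)
    have sl: "Suc (L-1) = L" using L2 by (simp add: L_def)
    have e2: "{ps!(L-1), ps!L} \<in> F" using ep[of "L-1"] lt unfolding sl by (simp add: L_def)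
    have "ps!(L-2) \<noteq> ps!L" "ps!(L-2) \<noteq> ps!(L-1)" "ps!L \<noteq> ps!(L-1)"
      using nep[of "L-2" L] nep[of "L-2" "L-1"] nep[of L "L-1"] lt L2 unfolding L_def by auto
    then have "dg F (ps!(L-1)) \<ge> 2" using two_edges[OF fin e1 e2] by auto
    then show False using dw vv by simp
  qed
  have "length ps = length qs" using A B by simp
  then show ?thesis using pre by (auto intro: nth_equalityI)
qed



lemma tree_finE: "is_tree V E \<Longrightarrow> finite E"
proof -
  assume t: "is_tree V E"
  then have "E \<subseteq> Pow V" "finite V" unfolding is_tree_def by auto
  then show ?thesis by (meson finite_Pow_iff finite_subset)
qed

lemma tree_c2: "is_tree V E \<Longrightarrow> e \<in> E \<Longrightarrow> card e = 2"
  unfolding is_tree_def by auto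

lemma sdiff_even: "finite A \<Longrightarrow> finite B \<Longrightarrow>
  even (card ((A-B)\<union>(B-A))) \<longleftrightarrow> (even (card A) \<longleftrightarrow> even (card B))"
proof -
  assume f: "finite A" "finite B"
  have 1: "card ((A-B)\<union>(B-A)) = card (A-B) + card (B-A)" using f by (intro card_Un_disjoint) auto
  have "card ((A-B) \<union> (A\<inter>B)) = card (A-B) + card (A\<inter>B)" using f by (intro card_Un_disjoint) auto
  moreover have "(A-B) \<union> (A\<inter>B) = A" by auto
  ultimately have 2: "card A = card (A-B) + card (A\<inter>B)" by simp
  have "card ((B-A) \<union> (A\<inter>B)) = card (B-A) + card (A\<inter>B)" using f by (intro card_Un_disjoint) auto
  moreover have "(B-A) \<union> (A\<inter>B) = B" by auto
  ultimately have 3: "card B = card (B-A) + card (A\<inter>B)" by simp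
  show ?thesis using 1 2 3 by presburger
qed

lemma dg_sdiff: "finite A \<Longrightarrow> finite B \<Longrightarrow>
  even (dg ((A-B)\<union>(B-A)) x) \<longleftrightarrow> (even (dg A x) \<longleftrightarrow> even (dg B x))"
proof -
  assume f: "finite A" "finite B"
  have "{e\<in>(A-B)\<union>(B-A). x \<in> e} = ({e\<in>A. x\<in>e} - {e\<in>B. x\<in>e}) \<union> ({e\<in>B. x\<in>e} - {e\<in>A. x\<in>e})" by auto
  then show ?thesis unfolding dg_def using sdiff_even[of "{e\<in>A. x\<in>e}" "{e\<in>B. x\<in>e}"] f by simp
qed

lemma odd_dg_pe: "distinct ps \<Longrightarrow> length ps \<ge> 2 \<Longrightarrow> odd (dg (pe ps) x) \<longleftrightarrow> x = hd ps \<or> x = last ps"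
proof -
  assume a: "distinct ps" "length ps \<ge> 2"
  then have "ps \<noteq> []" by auto
  then have "hd ps \<in> set ps" "last ps \<in> set ps" by auto
  then show ?thesis using dg_pe[OF a, of x] by auto
qed

lemma dg_pe_le2: "distinct ps \<Longrightarrow> dg (pe ps) x \<le> 2"
proof -
  assume a: "distinct ps"
  show ?thesis
  proof (cases "length ps \<ge> 2")
    case True then show ?thesis using dg_pe[OF a True, of x] by auto
  next
    case False
    then have "pe ps = {}" by (cases ps rule: pe.cases) auto
    then show ?thesis by (simp add: dg_def)
  qed
qed

lemma tree_path_unique:
  assumes t: "is_tree V E" and p1: "is_path E u v ps" and p2: "is_path E u v qs"
  shows "ps = qs"
proof (cases "u = v")
  case True
  then show ?thesis using path_same p1 p2 by metis
next
  case False
  have L1: "length ps \<ge> 2" using path_len2[OF p1 False] .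
  have L2: "length qs \<ge> 2" using path_len2[OF p2 False] .
  have d1: "distinct ps" "hd ps = u" "last ps = v" "walk E ps" using p1 by (auto simp: is_path_walk)
  have d2: "distinct qs" "hd qs = u" "last qs = v" "walk E qs" using p2 by (auto simp: is_path_walk)
  define F where "F = (pe ps - pe qs) \<union> (pe qs - pe ps)"
  have "F = {}"
  proof (rule even_acyclic_empty)
    show "finite F" unfolding F_def using finite_pe by auto
    show "F \<subseteq> E" unfolding F_def using d1 d2 walk_pe by blast
    then show "\<forall>e\<in>F. card e = 2" using tree_c2[OF t] by auto
    show "\<not> (\<exists>cs. is_cycle E cs)" using t unfolding is_tree_def by auto
    show "\<forall>x. even (dg F x)" unfolding F_def
    proof
      fix x
      have "odd (dg (pe ps) x) \<longleftrightarrow> odd (dg (pe qs) x)"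
        using odd_dg_pe[OF d1(1) L1, of x] odd_dg_pe[OF d2(1) L2, of x] d1 d2 by simp
      then show "even (dg ((pe ps - pe qs) \<union> (pe qs - pe ps)) x)"
        using dg_sdiff[OF finite_pe finite_pe, of ps qs x] by simp
    qed
  qed
  then have peq: "pe ps = pe qs" unfolding F_def by auto
  show ?thesis
  proof (rule deg2_unique)
    show "finite (pe ps)" by (rule finite_pe)
    show "is_path (pe ps) u v ps" using d1 L1 by (auto simp: is_path_walk walk_pe)
    show "is_path (pe ps) u v qs" using d2 L2 peq by (auto simp: is_path_walk walk_pe)
    show "dg (pe ps) u \<le> 1" "dg (pe ps) v \<le> 1" "dg (pe ps) v \<le> 1" using dg_pe[OF d1(1) L1] d1 by auto
    show "\<forall>x. dg (pe ps) x \<le> 2" using dg_pe_le2[OF d1(1)] by auto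
  qed (use False in auto)
qed

lemma pedges_eq: "is_tree V E \<Longrightarrow> is_path E u v ps \<Longrightarrow> pedges E u v = path_edges ps"
  unfolding pedges_def by (metis theI tree_path_unique)

lemma walk_mono: "walk F ps \<Longrightarrow> F \<subseteq> G \<Longrightarrow> walk G ps"
  by (auto simp: walk_pe)

lemma is_path_mono: "is_path F u v ps \<Longrightarrow> F \<subseteq> G \<Longrightarrow> is_path G u v ps"
  by (auto simp: is_path_walk walk_mono)

lemma pedges_sub: "is_tree V E \<Longrightarrow> E' \<subseteq> E \<Longrightarrow> is_path E' u v ps \<Longrightarrow> pedges E' u v = path_edges ps"
  unfolding pedges_def by (metis theI tree_path_unique is_path_mono)

lemma pedges_sym: "is_tree V E \<Longrightarrow> is_path E u v ps \<Longrightarrow> pedges E v u = pedges E u v"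
  using pedges_eq is_path_rev path_edges_pe pe_rev by metis



lemma degree_dg: "degree E v = dg E v"
  by (simp add: degree_def dg_def)

lemma card2_MinMax: "card (p::nat set) = 2 \<Longrightarrow> p = {Min p, Max p} \<and> Min p < Max p"
proof -
  assume "card p = 2"
  then obtain x y where "p = {x,y}" "x \<noteq> y" by (auto simp: card_2_iff)
  then show ?thesis by (cases "x < y") (auto simp: min_def max_def)
qed

lemma pair_path:
  assumes t: "is_tree V E" and c: "card p = 2" and ex: "\<exists>ps. is_path E (lf (Min p)) (lf (Max p)) ps"
    and st: "s \<in> p" "t \<in> p" "s \<noteq> t"
  shows "\<exists>ps. is_path E (lf s) (lf t) ps \<and> pe ps = pair_edges E lf p"
proof -
  obtain ps where ps: "is_path E (lf (Min p)) (lf (Max p)) ps" using ex by blast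
  have pe1: "pair_edges E lf p = pe ps" using pedges_eq[OF t ps] unfolding pair_edges_def path_edges_pe .
  have mm: "p = {Min p, Max p}" "Min p < Max p" using card2_MinMax[OF c] by auto
  show ?thesis
  proof (cases "s = Min p")
    case True
    have "t = Min p \<or> t = Max p" using st(2) mm(1) by (metis insert_iff singletonD)
    then have "t = Max p" using st True by auto
    then show ?thesis using True ps pe1 by auto
  next
    case False
    then have "s = Max p" "t = Min p" using st mm by auto
    then show ?thesis using is_path_rev[OF ps] pe1 pe_rev by metis
  qed
qed

definition UM :: "'v set set \<Rightarrow> (nat \<Rightarrow> 'v) \<Rightarrow> nat set set \<Rightarrow> 'v set set" where
  "UM E lf M = \<Union>(pair_edges E lf ` M)"

lemma crm_U:
  assumes t: "is_tree V E" and inj: "inj_on lf {1..n}" and S: "S \<subseteq> {1..n}" and c: "crm E lf S M"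
  shows "finite M" "UM E lf M \<subseteq> E" "finite (UM E lf M)"
    "\<And>x. odd (dg (UM E lf M) x) \<longleftrightarrow> x \<in> lf ` S"
proof -
  have c2: "\<And>p. p \<in> M \<Longrightarrow> card p = 2" and US: "\<Union>M = S"
    and dis: "\<And>p q. p \<in> M \<Longrightarrow> q \<in> M \<Longrightarrow> p \<noteq> q \<Longrightarrow> p \<inter> q = {}"
    and ex: "\<And>p. p \<in> M \<Longrightarrow> \<exists>ps. is_path E (lf (Min p)) (lf (Max p)) ps"
    and edis: "\<And>p q. p \<in> M \<Longrightarrow> q \<in> M \<Longrightarrow> p \<noteq> q \<Longrightarrow> pair_edges E lf p \<inter> pair_edges E lf q = {}"
    using c unfolding crm_def by auto
  show fM: "finite M" using US S by (metis finite_UnionD finite_atLeastAtMost finite_subset)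
  have pinfo: "\<exists>ps. is_path E (lf (Min p)) (lf (Max p)) ps \<and> pe ps = pair_edges E lf p" if "p \<in> M" for p
    using pair_path[OF t c2[OF that] ex[OF that], of "Min p" "Max p"] card2_MinMax[OF c2[OF that]] by auto
  have PEsub: "pair_edges E lf p \<subseteq> E" if "p \<in> M" for p
    using pinfo[OF that] by (auto simp: is_path_walk walk_pe)
  show "UM E lf M \<subseteq> E" unfolding UM_def using PEsub by auto
  have finPE: "finite (pair_edges E lf p)" if "p \<in> M" for p
    using pinfo[OF that] finite_pe by metis
  show "finite (UM E lf M)" unfolding UM_def using fM finPE by auto
  fix x
  have oddp: "odd (dg (pair_edges E lf p) x) \<longleftrightarrow> x \<in> lf ` p" if pM: "p \<in> M" for p
  proof -
    obtain ps where ps: "is_path E (lf (Min p)) (lf (Max p)) ps" "pe ps = pair_edges E lf p"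
      using pinfo[OF pM] by blast
    have mm: "p = {Min p, Max p}" "Min p < Max p" using card2_MinMax[OF c2[OF pM]] by auto
    have "p \<subseteq> {1..n}" using pM US S by auto
    then have "lf (Min p) \<noteq> lf (Max p)" using inj mm by (metis inj_on_contraD insertCI less_irrefl subsetD)
    then have L: "length ps \<ge> 2" using path_len2[OF ps(1)] by simp
    have "distinct ps" "hd ps = lf (Min p)" "last ps = lf (Max p)" using ps(1) by (auto simp: is_path_def)
    then have "odd (dg (pe ps) x) \<longleftrightarrow> x = lf (Min p) \<or> x = lf (Max p)" using odd_dg_pe[of ps x] L by simp
    also have "\<dots> \<longleftrightarrow> x \<in> lf ` p" using mm by (metis image_insert image_empty insert_iff singletonD)
    finally show ?thesis using ps(2) by simp
  qed
  have "{e \<in> UM E lf M. x \<in> e} = (\<Union>p\<in>M. {e \<in> pair_edges E lf p. x \<in> e})" unfolding UM_def by auto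
  moreover have "card (\<Union>p\<in>M. {e \<in> pair_edges E lf p. x \<in> e}) = (\<Sum>p\<in>M. card {e \<in> pair_edges E lf p. x \<in> e})"
  proof (rule card_UN_disjoint)
    show "\<forall>i\<in>M. \<forall>j\<in>M. i \<noteq> j \<longrightarrow> {e \<in> pair_edges E lf i. x \<in> e} \<inter> {e \<in> pair_edges E lf j. x \<in> e} = {}"
      using edis by blast
  qed (use fM finPE in auto)
  ultimately have "dg (UM E lf M) x = (\<Sum>p\<in>M. dg (pair_edges E lf p) x)"
    unfolding dg_def by simp
  then have "even (dg (UM E lf M) x) \<longleftrightarrow> even (card {p\<in>M. odd (dg (pair_edges E lf p) x)})"
    using even_sum_iff[OF fM] by simp
  also have "{p\<in>M. odd (dg (pair_edges E lf p) x)} = {p\<in>M. x \<in> lf ` p}" using oddp by auto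
  finally have ev: "even (dg (UM E lf M) x) \<longleftrightarrow> even (card {p\<in>M. x \<in> lf ` p})" .
  show "odd (dg (UM E lf M) x) \<longleftrightarrow> x \<in> lf ` S"
  proof (cases "x \<in> lf ` S")
    case True
    then obtain s where s: "s \<in> S" "x = lf s" by auto
    then obtain p0 where p0: "p0 \<in> M" "s \<in> p0" using US by auto
    have "{p\<in>M. x \<in> lf ` p} = {p0}"
    proof (rule set_eqI, rule iffI)
      fix p assume "p \<in> {p\<in>M. x \<in> lf ` p}"
      then obtain s' where s': "p \<in> M" "s' \<in> p" "lf s' = lf s" using s by auto
      have "s' \<in> {1..n}" "s \<in> {1..n}" using s' s US S by auto
      then have "s' = s" using inj s' by (meson inj_onD)
      then show "p \<in> {p0}" using dis p0 s' by blast
    qed (use p0 s in auto)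
    then show ?thesis using ev True by simp
  next
    case False
    have "{p\<in>M. x \<in> lf ` p} = {}" using False US by auto
    then show ?thesis using ev False by (simp only: card.empty) simp
  qed
qed



lemma crm_facts:
  assumes "crm E lf S M"
  shows "\<And>p. p \<in> M \<Longrightarrow> card p = 2" "\<Union>M = S"
    "\<And>p q. p \<in> M \<Longrightarrow> q \<in> M \<Longrightarrow> p \<noteq> q \<Longrightarrow> p \<inter> q = {}"
    "\<And>p. p \<in> M \<Longrightarrow> \<exists>ps. is_path E (lf (Min p)) (lf (Max p)) ps"
    "\<And>p q. p \<in> M \<Longrightarrow> q \<in> M \<Longrightarrow> p \<noteq> q \<Longrightarrow> pair_edges E lf p \<inter> pair_edges E lf q = {}"
  using assms unfolding crm_def by auto

lemma crm_sub:
  assumes t: "is_tree V E" and inj: "inj_on lf {1..n}" and S: "S \<subseteq> {1..n}"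
    and c1: "crm E lf S M" and c2: "crm E lf S M'" and U: "UM E lf M = UM E lf M'"
    and fin: "finite (UM E lf M)" and d2: "\<forall>x. dg (UM E lf M) x \<le> 2"
    and d1: "\<forall>a\<in>{1..n}. dg (UM E lf M) (lf a) \<le> 1"
  shows "M \<subseteq> M'"
proof
  fix p assume pM: "p \<in> M"
  note f1 = crm_facts[OF c1] and f2 = crm_facts[OF c2]
  define a where "a = Min p"
  define b where "b = Max p"
  have mm: "p = {a, b}" "a < b" using card2_MinMax[OF f1(1)[OF pM]] by (auto simp: a_def b_def)
  obtain ps where ps: "is_path E (lf a) (lf b) ps" "pe ps = pair_edges E lf p"
    using pair_path[OF t f1(1)[OF pM] f1(4)[OF pM], of a b] mm by auto
  have aS: "a \<in> S" "b \<in> S" using mm pM f1(2) by auto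
  then obtain q where q: "q \<in> M'" "a \<in> q" using f2(2) by auto
  obtain c where c: "q = {a, c}" "c \<noteq> a" using card2_mem[OF f2(1)[OF q(1)] q(2)] by auto
  obtain qs where qs: "is_path E (lf a) (lf c) qs" "pe qs = pair_edges E lf q"
    using pair_path[OF t f2(1)[OF q(1)] f2(4)[OF q(1)], of a c] c by auto
  have cS: "c \<in> S" using c q f2(2) by auto
  have inN: "a \<in> {1..n}" "b \<in> {1..n}" "c \<in> {1..n}" using aS cS S by auto
  have ab: "lf a \<noteq> lf b" using inj inN mm by (metis inj_onD less_irrefl)
  have ac: "lf a \<noteq> lf c" using inj inN c by (metis inj_onD)
  have PEp: "pair_edges E lf p \<subseteq> UM E lf M" using pM unfolding UM_def by auto
  have PEq: "pair_edges E lf q \<subseteq> UM E lf M" using q U unfolding UM_def by auto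
  have p1: "is_path (UM E lf M) (lf a) (lf b) ps" using ps PEp by (auto simp: is_path_walk walk_pe)
  have p2: "is_path (UM E lf M) (lf a) (lf c) qs" using qs PEq by (auto simp: is_path_walk walk_pe)
  have "ps = qs"
    by (rule deg2_unique[OF fin p1 p2]) (use d1 d2 inN ab ac in auto)
  then have "lf b = lf c" using ps qs by (auto simp: is_path_def)
  then have "b = c" using inj inN by (metis inj_onD)
  then show "p \<in> M'" using q c mm by simp
qed

lemma crm_unique:
  assumes t: "is_tree V E" and lv: "bij_betw lf {1..n} {v\<in>V. degree E v = 1}"
    and d3: "\<forall>v\<in>V. degree E v \<noteq> 1 \<longrightarrow> degree E v = 3" and S: "S \<subseteq> {1..n}"
    and c1: "crm E lf S M" and c2: "crm E lf S M'"
  shows "M = M'"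
proof -
  have inj: "inj_on lf {1..n}" using lv by (rule bij_betw_imp_inj_on)
  have img: "lf ` {1..n} = {v\<in>V. dg E v = 1}" using lv by (simp add: bij_betw_def degree_dg)
  note u1 = crm_U[OF t inj S c1] and u2 = crm_U[OF t inj S c2]
  have finE: "finite E" using tree_finE[OF t] .
  have EV: "\<And>e. e \<in> E \<Longrightarrow> e \<subseteq> V" using t unfolding is_tree_def by auto
  have UU: "UM E lf M = UM E lf M'"
  proof -
    define F where "F = (UM E lf M - UM E lf M') \<union> (UM E lf M' - UM E lf M)"
    have "F = {}"
    proof (rule even_acyclic_empty)
      show "finite F" unfolding F_def using u1(3) u2(3) by auto
      show "F \<subseteq> E" unfolding F_def using u1(2) u2(2) by auto
      then show "\<forall>e\<in>F. card e = 2" using tree_c2[OF t] by auto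
      show "\<not> (\<exists>cs. is_cycle E cs)" using t unfolding is_tree_def by auto
      show "\<forall>x. even (dg F x)" unfolding F_def
      proof
        fix x
        show "even (dg ((UM E lf M - UM E lf M') \<union> (UM E lf M' - UM E lf M)) x)"
          using dg_sdiff[OF u1(3) u2(3), of x] u1(4)[of x] u2(4)[of x] by blast
      qed
    qed
    then show ?thesis unfolding F_def by auto
  qed
  have degs: "\<forall>x. dg (UM E lf M'') x \<le> 2" "\<forall>a\<in>{1..n}. dg (UM E lf M'') (lf a) \<le> 1"
    if cc: "crm E lf S M''" for M''
  proof -
    note u = crm_U[OF t inj S cc]
    have le: "dg (UM E lf M'') x \<le> dg E x" for x
      unfolding dg_def using u(2) finE by (intro card_mono) auto
    show "\<forall>a\<in>{1..n}. dg (UM E lf M'') (lf a) \<le> 1"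
    proof
      fix a assume "a \<in> {1..n}"
      then have "dg E (lf a) = 1" using img by auto
      then show "dg (UM E lf M'') (lf a) \<le> 1" using le[of "lf a"] by simp
    qed
    show "\<forall>x. dg (UM E lf M'') x \<le> 2"
    proof
      fix x
      show "dg (UM E lf M'') x \<le> 2"
      proof (cases "x \<in> V")
        case False
        then have "{e\<in>E. x \<in> e} = {}" using EV by auto
        then have "dg E x = 0" unfolding dg_def by (simp only: card.empty)
        then show ?thesis using le[of x] by simp
      next
        case True
        show ?thesis
        proof (cases "dg E x = 1")
          case True then show ?thesis using le[of x] by simp
        next
          case False
          then have "dg E x = 3" using d3 \<open>x \<in> V\<close> by (simp add: degree_dg)
          moreover have "x \<notin> lf ` S" using False img S by auto
          then have "even (dg (UM E lf M'') x)" using u(4)[of x] by simp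
          ultimately show ?thesis using le[of x] by (cases "dg (UM E lf M'') x = 3") auto
        qed
      qed
    qed
  qed
  have "M \<subseteq> M'" using crm_sub[OF t inj S c1 c2 UU u1(3)] degs[OF c1] by blast
  moreover have "M' \<subseteq> M" using crm_sub[OF t inj S c2 c1 UU[symmetric] u2(3)] degs[OF c2] by blast
  ultimately show ?thesis by blast
qed



locale cubic =
  fixes V :: "'v set" and E :: "'v set set" and lf :: "nat \<Rightarrow> 'v" and n i j :: nat
  assumes tree: "is_tree V E"
    and leaves: "bij_betw lf {1..n} {v \<in> V. degree E v = 1}"
    and deg3: "\<forall>v\<in>V. degree E v \<noteq> 1 \<longrightarrow> degree E v = 3"
    and ij: "i \<in> {1..n}" "j \<in> {1..n}" "i \<noteq> j"
begin

abbreviation "PP \<equiv> pedges E (lf i) (lf j)"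
abbreviation "EF \<equiv> E - PP"

lemma inj: "inj_on lf {1..n}" using leaves by (rule bij_betw_imp_inj_on)
lemma img: "lf ` {1..n} = {v\<in>V. dg E v = 1}" using leaves by (simp add: bij_betw_def degree_dg)

lemma finE: "finite E" using tree_finE[OF tree] .

lemma path_ij: "\<exists>ps. is_path E (lf i) (lf j) ps \<and> pe ps = PP"
proof -
  have "lf i \<in> V" "lf j \<in> V" using img ij by auto
  then obtain ps where ps: "is_path E (lf i) (lf j) ps" using tree unfolding is_tree_def by blast
  then show ?thesis using pedges_eq[OF tree ps] path_edges_pe by metis
qed

lemma PE_ij: "pair_edges E lf {i,j} = PP"
proof -
  obtain ps where ps: "is_path E (lf i) (lf j) ps" using path_ij by blast
  show ?thesis
  proof (cases "i < j")
    case True then show ?thesis by (simp add: pair_edges_def)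
  next
    case False
    then have "Min {i,j} = j" "Max {i,j} = i" using ij by auto
    then show ?thesis using pedges_sym[OF tree ps] by (simp add: pair_edges_def)
  qed
qed

lemma K1:
  assumes ps: "is_path EF u v ps"
  shows "is_path E u v ps" "pedges EF u v = pe ps" "pedges E u v = pe ps" "pe ps \<inter> PP = {}"
proof -
  show p: "is_path E u v ps" using is_path_mono[OF ps] by blast
  show "pedges EF u v = pe ps" using pedges_sub[OF tree _ ps] path_edges_pe by blast
  show "pedges E u v = pe ps" using pedges_eq[OF tree p] path_edges_pe by blast
  show "pe ps \<inter> PP = {}" using ps by (auto simp: is_path_walk walk_pe)
qed

lemma K2:
  assumes ps: "is_path E u v ps" and d: "pedges E u v \<inter> PP = {}"
  shows "is_path EF u v ps" "pedges EF u v = pedges E u v"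
proof -
  have pe: "pedges E u v = pe ps" using pedges_eq[OF tree ps] path_edges_pe by blast
  have "pe ps \<subseteq> E" using ps by (auto simp: is_path_walk walk_pe)
  then show p: "is_path EF u v ps" using ps d pe by (auto simp: is_path_walk walk_pe)
  show "pedges EF u v = pedges E u v" using pedges_sub[OF tree _ p] path_edges_pe pe by auto
qed

lemma end_edges: "is_path F x y ps \<Longrightarrow> x \<noteq> y \<Longrightarrow> (\<exists>e\<in>pe ps. x \<in> e) \<and> (\<exists>e\<in>pe ps. y \<in> e)"
proof -
  assume a: "is_path F x y ps" "x \<noteq> y"
  have L: "length ps \<ge> 2" using path_len2[OF a] .
  have d: "distinct ps" "hd ps = x" "last ps = y" using a by (auto simp: is_path_def)
  have ne: "ps \<noteq> []" using L by auto
  then have "x \<in> set ps" "y \<in> set ps" using d by auto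
  then have "dg (pe ps) x = 1" "dg (pe ps) y = 1" using dg_pe[OF d(1) L] d by auto
  then have "{e\<in>pe ps. x \<in> e} \<noteq> {}" "{e\<in>pe ps. y \<in> e} \<noteq> {}" unfolding dg_def by (metis card.empty zero_neq_one)+
  then show ?thesis by blast
qed

lemma K3:
  assumes a: "a \<in> {i,j}" and ps: "is_path EF x y ps" and xy: "x \<noteq> y" and xa: "x = lf a \<or> y = lf a"
  shows False
proof -
  obtain pij where pij: "is_path E (lf i) (lf j) pij" "pe pij = PP" using path_ij by blast
  have lij: "lf i \<noteq> lf j" using inj ij by (meson inj_onD)
  have "\<exists>e\<in>pe pij. lf a \<in> e" using end_edges[OF pij(1) lij] a by blast
  then have "\<exists>e\<in>PP. lf a \<in> e" using pij(2) by simp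
  then obtain e1 where e1: "e1 \<in> PP" "lf a \<in> e1" by blast
  have "\<exists>e\<in>pe ps. lf a \<in> e" using end_edges[OF ps xy] xa by metis
  then obtain e2 where e2: "e2 \<in> pe ps" "lf a \<in> e2" by blast
  have e2E: "e2 \<in> EF" using e2 ps by (auto simp: is_path_walk walk_pe)
  have e1E: "e1 \<in> E" using e1 pij by (auto simp: is_path_walk walk_pe)
  have "a \<in> {1..n}" using a ij by blast
  then have "lf a \<in> lf ` {1..n}" by (rule imageI)
  then have "dg E (lf a) = 1" unfolding img by blast
  then obtain e0 where e0: "{e\<in>E. lf a \<in> e} = {e0}" unfolding dg_def using card_1_singletonE by blast
  have "e1 \<in> {e\<in>E. lf a \<in> e}" "e2 \<in> {e\<in>E. lf a \<in> e}" using e1 e1E e2 e2E by auto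
  then have "e1 = e2" unfolding e0 by simp
  then show False using e1 e2E by simp
qed

lemma forest_crm_no_ij:
  assumes c: "crm EF lf S M" and S: "S \<subseteq> {1..n}"
  shows "i \<notin> S" "j \<notin> S"
proof -
  note f = crm_facts[OF c]
  have "a \<notin> S" if a: "a \<in> {i,j}" for a
  proof
    assume "a \<in> S"
    then obtain p where p: "p \<in> M" "a \<in> p" using f(2) by auto
    have mm: "p = {Min p, Max p}" "Min p < Max p" using card2_MinMax[OF f(1)[OF p(1)]] by auto
    obtain ps where ps: "is_path EF (lf (Min p)) (lf (Max p)) ps" using f(4)[OF p(1)] by blast
    have "p \<subseteq> {1..n}" using p f(2) S by auto
    then have "lf (Min p) \<noteq> lf (Max p)" using inj mm by (metis inj_onD insertCI less_irrefl subsetD)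
    moreover have "lf (Min p) = lf a \<or> lf (Max p) = lf a" using p(2) mm(1) by (metis insert_iff singletonD)
    ultimately show False using K3[OF a ps] by metis
  qed
  then show "i \<notin> S" "j \<notin> S" by auto
qed

lemma PEM:
  assumes c: "crm EF lf S M" and p: "p \<in> M"
  shows "pair_edges E lf p = pair_edges EF lf p" "pair_edges E lf p \<inter> PP = {}"
    "\<exists>ps. is_path E (lf (Min p)) (lf (Max p)) ps"
proof -
  obtain ps where ps: "is_path EF (lf (Min p)) (lf (Max p)) ps" using crm_facts(4)[OF c p] by blast
  show "pair_edges E lf p = pair_edges EF lf p" "pair_edges E lf p \<inter> PP = {}"
    "\<exists>ps. is_path E (lf (Min p)) (lf (Max p)) ps"
    using K1[OF ps] unfolding pair_edges_def by auto
qed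

lemma path_MinMax_ij: "\<exists>ps. is_path E (lf (Min {i,j})) (lf (Max {i,j})) ps"
proof -
  obtain ps where ps: "is_path E (lf i) (lf j) ps" using path_ij by blast
  show ?thesis
  proof (cases "i < j")
    case True then show ?thesis using ps by auto
  next
    case False
    then have "Min {i,j} = j" "Max {i,j} = i" using ij by auto
    then show ?thesis using is_path_rev[OF ps] by auto
  qed
qed

lemma FC2:
  assumes c: "crm EF lf S M" and S: "S \<subseteq> {1..n}"
  shows "crm E lf (insert i (insert j S)) (insert {i,j} M)"
proof -
  note f = crm_facts[OF c]
  have nij: "i \<notin> S" "j \<notin> S" using forest_crm_no_ij[OF c S] by auto
  have pS: "\<And>p. p \<in> M \<Longrightarrow> p \<subseteq> S" using f(2) by auto
  have pne: "\<And>p. p \<in> M \<Longrightarrow> p \<noteq> {i,j}" using pS nij by auto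
  show ?thesis unfolding crm_def
  proof (intro conjI ballI impI)
    fix p assume "p \<in> insert {i,j} M"
    then show "card p = 2" using f(1) ij by auto
  next
    show "\<Union>(insert {i,j} M) = insert i (insert j S)" using f(2) by auto
  next
    fix p q assume pq: "p \<in> insert {i,j} M" "q \<in> insert {i,j} M" "p \<noteq> q"
    then show "p \<inter> q = {}" using f(3) pS nij by blast
  next
    fix p assume "p \<in> insert {i,j} M"
    then show "\<exists>ps. is_path E (lf (Min p)) (lf (Max p)) ps" using path_MinMax_ij PEM(3)[OF c] by auto
  next
    fix p q assume pq: "p \<in> insert {i,j} M" "q \<in> insert {i,j} M" "p \<noteq> q"
    show "pair_edges E lf p \<inter> pair_edges E lf q = {}"
    proof (cases "p = {i,j}")
      case True
      then have "q \<in> M" using pq by auto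
      then show ?thesis using True PE_ij PEM(2)[OF c] by blast
    next
      case False
      then have p: "p \<in> M" using pq by auto
      show ?thesis
      proof (cases "q = {i,j}")
        case True
        then show ?thesis using p PE_ij PEM(2)[OF c] by blast
      next
        case False
        then have "q \<in> M" using pq by auto
        then show ?thesis using p pq(3) f(5) PEM(1)[OF c] by metis
      qed
    qed
  qed
qed

lemma FC3:
  assumes c: "crm E lf S M" and ijM: "{i,j} \<in> M"
  shows "crm EF lf (S - {i,j}) (M - {{i,j}})"
proof -
  note f = crm_facts[OF c]
  have dij: "\<And>p. p \<in> M \<Longrightarrow> p \<noteq> {i,j} \<Longrightarrow> p \<inter> {i,j} = {}" using f(3) ijM by blast
  have dP: "\<And>p. p \<in> M \<Longrightarrow> p \<noteq> {i,j} \<Longrightarrow> pair_edges E lf p \<inter> PP = {}"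
    using f(5) ijM PE_ij by metis
  have K: "\<exists>ps. is_path EF (lf (Min p)) (lf (Max p)) ps \<and> pair_edges EF lf p = pair_edges E lf p"
    if pM: "p \<in> M" "p \<noteq> {i,j}" for p
  proof -
    obtain ps where ps: "is_path E (lf (Min p)) (lf (Max p)) ps" using f(4) pM by blast
    show ?thesis using K2[OF ps] dP[OF pM] unfolding pair_edges_def by auto
  qed
  show ?thesis unfolding crm_def
  proof (intro conjI ballI impI)
    fix p assume "p \<in> M - {{i,j}}"
    then show "card p = 2" using f(1) by auto
  next
    show "\<Union>(M - {{i,j}}) = S - {i,j}"
    proof
      show "\<Union>(M - {{i,j}}) \<subseteq> S - {i,j}" using f(2) dij by blast
      show "S - {i,j} \<subseteq> \<Union>(M - {{i,j}})" using f(2) by blast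
    qed
  next
    fix p q assume "p \<in> M - {{i,j}}" "q \<in> M - {{i,j}}" "p \<noteq> q"
    then show "p \<inter> q = {}" using f(3) by blast
  next
    fix p assume "p \<in> M - {{i,j}}"
    then show "\<exists>ps. is_path EF (lf (Min p)) (lf (Max p)) ps" using K by blast
  next
    fix p q assume pq: "p \<in> M - {{i,j}}" "q \<in> M - {{i,j}}" "p \<noteq> q"
    then show "pair_edges EF lf p \<inter> pair_edges EF lf q = {}" using K f(5) by (metis DiffE singletonI)
  qed
qed

lemma forest_unique:
  assumes c1: "crm EF lf S M1" and c2: "crm EF lf S M2" and S: "S \<subseteq> {1..n}"
  shows "M1 = M2"
proof -
  have S': "insert i (insert j S) \<subseteq> {1..n}" using S ij by auto
  have "insert {i,j} M1 = insert {i,j} M2"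
    using crm_unique[OF tree leaves deg3 S' FC2[OF c1 S] FC2[OF c2 S]] .
  moreover have "{i,j} \<notin> M1" "{i,j} \<notin> M2"
    using forest_crm_no_ij[OF c1 S] forest_crm_no_ij[OF c2 S] crm_facts(2)[OF c1] crm_facts(2)[OF c2] by auto
  ultimately show ?thesis by (metis insert_ident)
qed

lemma gamma_eq:
  assumes c: "crm EF lf S M" and p: "p \<in> M"
  shows "gammaV E lf i j \<alpha> p = \<alpha> p"
  using PEM(2)[OF c p] by (simp add: gammaV_def)

lemma crm_fin: "crm F lf S M \<Longrightarrow> S \<subseteq> {1..n} \<Longrightarrow> finite M"
proof -
  assume c: "crm F lf S M" "S \<subseteq> {1..n}"
  then have "M \<subseteq> Pow {1..n}" using crm_facts(2)[OF c(1)] by auto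
  then show "finite M" by (meson finite_Pow_iff finite_atLeastAtMost finite_subset)
qed

lemma pair_agree:
  fixes \<alpha> \<beta> :: "nat set \<Rightarrow> real"
  assumes agree: "\<forall>k\<in>{1..n}. \<forall>l\<in>{1..n}. k \<noteq> l \<longrightarrow> {k, l} \<noteq> {i, j} \<longrightarrow> \<alpha> {k, l} = \<beta> {k, l}"
    and c: "crm F lf S M" and S: "S \<subseteq> {1..n}" and p: "p \<in> M" "p \<noteq> {i,j}"
  shows "\<alpha> p = \<beta> p"
proof -
  have mm: "p = {Min p, Max p}" "Min p < Max p" using card2_MinMax[OF crm_facts(1)[OF c p(1)]] by auto
  have "p \<subseteq> {1..n}" using crm_facts(2)[OF c] p S by auto
  then have "Min p \<in> {1..n}" "Max p \<in> {1..n}" using mm by auto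
  then show ?thesis using agree mm p(2) by (metis less_irrefl)
qed

lemma main:
  fixes \<alpha> \<beta> :: "nat set \<Rightarrow> real" and x :: "nat \<Rightarrow> real"
  assumes agree: "\<forall>k\<in>{1..n}. \<forall>l\<in>{1..n}. k \<noteq> l \<longrightarrow> {k, l} \<noteq> {i, j} \<longrightarrow> \<alpha> {k, l} = \<beta> {k, l}"
  shows "fF E lf n \<alpha> x - fF E lf n \<beta> x =
           x i * x j * (\<alpha> {i, j} - \<beta> {i, j}) *
           fF EF lf n (gammaV E lf i j \<alpha>) x"
proof -
  define SS where "SS = {S. S \<subseteq> {1..n} \<and> even (card S) \<and> (\<exists>M. crm E lf S M)}"
  define SF where "SF = {S. S \<subseteq> {1..n} \<and> even (card S) \<and> (\<exists>M. crm EF lf S M)}"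
  define TH where "TH S = (THE M. crm E lf S M)" for S
  define \<gamma> where "\<gamma> = gammaV E lf i j \<alpha>"
  have TH: "crm E lf S (TH S)" if SS0: "S \<in> SS" for S
  proof -
    obtain M where M: "crm E lf S M" using SS0 unfolding SS_def by blast
    have "S \<subseteq> {1..n}" using SS0 unfolding SS_def by blast
    then have "\<exists>!M. crm E lf S M" using M crm_unique[OF tree leaves deg3] by blast
    then show ?thesis unfolding TH_def by (rule theI')
  qed
  have SSsub: "S \<subseteq> {1..n}" if "S \<in> SS" for S using that unfolding SS_def by blast
  define S1 where "S1 = {S\<in>SS. {i,j} \<in> TH S}"
  have finSS: "finite SS"
  proof -
    have "SS \<subseteq> Pow {1..n}" unfolding SS_def by auto
    then show ?thesis by (meson finite_Pow_iff finite_atLeastAtMost finite_subset)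
  qed
  have AF: "alphaF E lf a S = (\<Prod>p\<in>TH S. a p)" for a S by (simp add: alphaF_def TH_def)
  have eq0: "alphaF E lf \<alpha> S = alphaF E lf \<beta> S" if "S \<in> SS - S1" for S
  proof -
    have S: "S \<in> SS" "{i,j} \<notin> TH S" using that unfolding S1_def by auto
    show ?thesis unfolding AF
    proof (rule prod.cong[OF refl])
      fix p assume "p \<in> TH S"
      then show "\<alpha> p = \<beta> p" using pair_agree[OF agree TH[OF S(1)] SSsub[OF S(1)]] S(2) by auto
    qed
  qed
  have ijS: "{i,j} \<subseteq> S" if "S \<in> S1" for S
    using that crm_facts(2)[OF TH] unfolding S1_def by blast
  have eq1: "alphaF E lf \<alpha> S - alphaF E lf \<beta> S = (\<alpha> {i,j} - \<beta> {i,j}) * (\<Prod>p\<in>TH S - {{i,j}}. \<alpha> p)"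
    if "S \<in> S1" for S
  proof -
    have S: "S \<in> SS" "{i,j} \<in> TH S" using that unfolding S1_def by auto
    have fin: "finite (TH S)" using crm_fin[OF TH[OF S(1)] SSsub[OF S(1)]] .
    have "(\<Prod>p\<in>TH S - {{i,j}}. \<beta> p) = (\<Prod>p\<in>TH S - {{i,j}}. \<alpha> p)"
    proof (rule prod.cong[OF refl])
      fix p assume "p \<in> TH S - {{i,j}}"
      then show "\<beta> p = \<alpha> p" using pair_agree[OF agree TH[OF S(1)] SSsub[OF S(1)]] by auto
    qed
    then show ?thesis unfolding AF using prod.remove[OF fin S(2), of \<alpha>] prod.remove[OF fin S(2), of \<beta>]
      by (simp add: algebra_simps)
  qed
  have xS: "(\<Prod>k\<in>S. x k) = x i * x j * (\<Prod>k\<in>S - {i,j}. x k)" if "S \<in> S1" for S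
  proof -
    have "S \<in> SS" using that unfolding S1_def by blast
    then have fin: "finite S" using SSsub finite_subset by blast
    have "i \<in> S" "j \<in> S" using ijS[OF that] by auto
    then have "(\<Prod>k\<in>S. x k) = x i * (\<Prod>k\<in>S - {i}. x k)" using prod.remove[OF fin \<open>i \<in> S\<close>, of x] by simp
    also have "(\<Prod>k\<in>S - {i}. x k) = x j * (\<Prod>k\<in>S - {i} - {j}. x k)"
      using prod.remove[of "S - {i}" j x] fin \<open>j \<in> S\<close> ij(3) by auto
    also have "S - {i} - {j} = S - {i,j}" by auto
    finally show ?thesis by simp
  qed
  have alF: "alphaF EF lf \<gamma> (S - {i,j}) = (\<Prod>p\<in>TH S - {{i,j}}. \<alpha> p)" if "S \<in> S1" for S
  proof -
    have S: "S \<in> SS" "{i,j} \<in> TH S" using that unfolding S1_def by auto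
    have c: "crm EF lf (S - {i,j}) (TH S - {{i,j}})" using FC3[OF TH[OF S(1)] S(2)] .
    have sub: "S - {i,j} \<subseteq> {1..n}" using SSsub[OF S(1)] by auto
    have "(THE M. crm EF lf (S - {i,j}) M) = TH S - {{i,j}}"
      by (rule the_equality) (use c forest_unique[OF _ c sub] in blast)+
    then show ?thesis unfolding alphaF_def \<gamma>_def using gamma_eq[OF c] by simp
  qed
  have bij: "bij_betw (\<lambda>S. S - {i,j}) S1 SF"
    unfolding bij_betw_def
  proof
    show "inj_on (\<lambda>S. S - {i,j}) S1"
    proof
      fix A B assume "A \<in> S1" "B \<in> S1" "A - {i,j} = B - {i,j}"
      then show "A = B" using ijS by blast
    qed
    show "(\<lambda>S. S - {i,j}) ` S1 = SF"
    proof
      show "(\<lambda>S. S - {i,j}) ` S1 \<subseteq> SF"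
      proof
        fix T assume "T \<in> (\<lambda>S. S - {i,j}) ` S1"
        then obtain S where S: "S \<in> S1" "T = S - {i,j}" by blast
        have SS: "S \<in> SS" "{i,j} \<in> TH S" using S unfolding S1_def by auto
        have fin: "finite S" using SSsub[OF SS(1)] by (meson finite_atLeastAtMost finite_subset)
        have "card T = card S - 2" using S(2) ijS[OF S(1)] card_Diff_subset[OF _ ijS[OF S(1)]] ij(3) by simp
        moreover have "even (card S)" using SS(1) unfolding SS_def by blast
        moreover have "card S \<ge> 2" using card_mono[OF fin ijS[OF S(1)]] ij(3) by simp
        ultimately have "even (card T)" by simp
        moreover have "crm EF lf T (TH S - {{i,j}})" using FC3[OF TH[OF SS(1)] SS(2)] S(2) by simp
        moreover have "T \<subseteq> {1..n}" using SSsub[OF SS(1)] S(2) by auto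
        ultimately show "T \<in> SF" unfolding SF_def by blast
      qed
      show "SF \<subseteq> (\<lambda>S. S - {i,j}) ` S1"
      proof
        fix T assume "T \<in> SF"
        then obtain M where M: "crm EF lf T M" and T: "T \<subseteq> {1..n}" "even (card T)" unfolding SF_def by blast
        have nij: "i \<notin> T" "j \<notin> T" using forest_crm_no_ij[OF M T(1)] by auto
        define S where "S = insert i (insert j T)"
        have c: "crm E lf S (insert {i,j} M)" unfolding S_def using FC2[OF M T(1)] .
        have fin: "finite T" using T(1) by (meson finite_atLeastAtMost finite_subset)
        have "card S = card T + 2" unfolding S_def using nij ij(3) fin by simp
        then have "even (card S)" using T(2) by simp
        moreover have Ssub: "S \<subseteq> {1..n}" unfolding S_def using T(1) ij by auto
        ultimately have SS: "S \<in> SS" unfolding SS_def using c by blast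
        have "TH S = insert {i,j} M" using crm_unique[OF tree leaves deg3 Ssub TH[OF SS] c] .
        then have "S \<in> S1" unfolding S1_def using SS by simp
        moreover have "T = S - {i,j}" unfolding S_def using nij by auto
        ultimately show "T \<in> (\<lambda>S. S - {i,j}) ` S1" by blast
      qed
    qed
  qed
  have "fF E lf n \<alpha> x - fF E lf n \<beta> x =
      (1 / 2 ^ n) * (\<Sum>S\<in>SS. (alphaF E lf \<alpha> S - alphaF E lf \<beta> S) * (\<Prod>k\<in>S. x k))"
    unfolding fF_def SS_def[symmetric] by (simp add: sum_subtractf right_diff_distrib left_diff_distrib)
  also have "(\<Sum>S\<in>SS. (alphaF E lf \<alpha> S - alphaF E lf \<beta> S) * (\<Prod>k\<in>S. x k))
      = (\<Sum>S\<in>S1. (alphaF E lf \<alpha> S - alphaF E lf \<beta> S) * (\<Prod>k\<in>S. x k))"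
    by (rule sum.mono_neutral_right[OF finSS]) (auto simp: S1_def eq0)
  also have "\<dots> = (\<Sum>S\<in>S1. (x i * x j * (\<alpha> {i,j} - \<beta> {i,j})) *
        (alphaF EF lf \<gamma> (S - {i,j}) * (\<Prod>k\<in>S - {i,j}. x k)))"
    by (rule sum.cong) (simp_all add: eq1 xS alF)
  also have "\<dots> = (x i * x j * (\<alpha> {i,j} - \<beta> {i,j})) *
        (\<Sum>S\<in>S1. alphaF EF lf \<gamma> (S - {i,j}) * (\<Prod>k\<in>S - {i,j}. x k))"
    by (simp add: sum_distrib_left)
  also have "(\<Sum>S\<in>S1. alphaF EF lf \<gamma> (S - {i,j}) * (\<Prod>k\<in>S - {i,j}. x k))
      = (\<Sum>T\<in>SF. alphaF EF lf \<gamma> T * (\<Prod>k\<in>T. x k))"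
    using sum.reindex_bij_betw[OF bij, of "\<lambda>T. alphaF EF lf \<gamma> T * (\<Prod>k\<in>T. x k)"] by simp
  finally have L: "fF E lf n \<alpha> x - fF E lf n \<beta> x = (1 / 2 ^ n) * ((x i * x j * (\<alpha> {i,j} - \<beta> {i,j})) *
      (\<Sum>T\<in>SF. alphaF EF lf \<gamma> T * (\<Prod>k\<in>T. x k)))" .
  have R: "fF EF lf n \<gamma> x = (1 / 2 ^ n) * (\<Sum>T\<in>SF. alphaF EF lf \<gamma> T * (\<Prod>k\<in>T. x k))"
    unfolding fF_def SF_def by simp
  show ?thesis unfolding \<gamma>_def[symmetric] L R by (simp only: mult.left_commute)
qed

end

theorem lemma6:
  fixes V :: "'v set" and E :: "'v set set" and lf :: "nat \<Rightarrow> 'v" and n i j :: nat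
    and \<alpha> \<beta> :: "nat set \<Rightarrow> real" and x :: "nat \<Rightarrow> real"
  assumes tree: "is_tree V E"
    and leaves: "bij_betw lf {1..n} {v \<in> V. degree E v = 1}"
    and deg3: "\<forall>v\<in>V. degree E v \<noteq> 1 \<longrightarrow> degree E v = 3"
    and ij: "i \<in> {1..n}" "j \<in> {1..n}" "i \<noteq> j"
    and \<alpha>_rng: "\<forall>k\<in>{1..n}. \<forall>l\<in>{1..n}. k \<noteq> l \<longrightarrow> \<bar>\<alpha> {k, l}\<bar> \<le> 1"
    and \<beta>_rng: "\<forall>k\<in>{1..n}. \<forall>l\<in>{1..n}. k \<noteq> l \<longrightarrow> \<bar>\<beta> {k, l}\<bar> \<le> 1"
    and agree: "\<forall>k\<in>{1..n}. \<forall>l\<in>{1..n}. k \<noteq> l \<longrightarrow> {k, l} \<noteq> {i, j} \<longrightarrow> \<alpha> {k, l} = \<beta> {k, l}"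
    and x: "\<forall>k\<in>{1..n}. x k \<in> {-1, 1}"
  shows "fF E lf n \<alpha> x - fF E lf n \<beta> x =
           x i * x j * (\<alpha> {i, j} - \<beta> {i, j}) *
           fF (E - pedges E (lf i) (lf j)) lf n (gammaV E lf i j \<alpha>) x"
  proof -
  interpret cubic V E lf n i j using tree leaves deg3 ij by unfold_locales auto
  show ?thesis using main[OF agree] .
qed

end
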